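(* Let $0\le\underline{s}<\overline{s}\le1$, $p\in(0,1)$, $u,v>0$ with $u\ne v$, and fix $\varepsilon_0>0$ with $C_{\varepsilon_0}\ne\emptyset$. There exist $\underline{\lambda}>0$ and $\overline{\lambda}<+\infty$ such that for every $f\in F^\infty_{(\underline{s},\overline{s})}$: if $G_f(\lambda,0)=G_f(\lambda,c)=0$ for some $c\in C_{\varepsilon_0}$ and some $\lambda\in\mathcal{E}_0\cap\mathcal{E}_c\cap\big((0,\underline{\lambda})\cup(\overline{\lambda},+\infty)\big)$, then there exist $\underline{s}<z_1<z_2<\overline{s}$ with $f(s)=0$ for all $s\in[z_1,z_2]$.
   Context: $F^\infty_{(\underline{s},\overline{s})}=\{f\in L_\infty(\underline{s},\overline{s})\cap C^0(\underline{s},\overline{s}): \int_{\underline{s}}^{\overline{s}} f(s)\frac{1-2s}{s}ds=0,\ \int_{\underline{s}}^{\overline{s}} f=1,\ f\ge0,\ f(s)\frac{1-s}{s}\in L_\infty(\underline{s},\overline{s})\}$. For $\lambda>0$, $c\in(-1,u)\cap(-v,1)$: $m(\lambda,c)=\frac{\lambda(1+c)}{\lambda(1+c)+(u-c)}$, $mm(\lambda,c)=\frac{\lambda(1-c)}{\lambda(1-c)+(v+c)}$; $\mathcal{E}_c=\{\lambda>0: m(\lambda,c),mm(\lambda,c)\in(\underline{s},\overline{s})\}$. $C=\{c\in(-1,u)\cap(-v,1):\mathcal{E}_c\ne\emptyset\}\setminus\{0\}$, $C_{\varepsilon_0}=C\cap(-1+\varepsilon_0,u-\varepsilon_0)\cap(-v+\varepsilon_0,1-\varepsilon_0)$.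 $G_f(\lambda,c)=p\int_{\underline{s}}^{m(\lambda,c)} f(s)\frac{1-2s}{s}ds+(1-p)\int_{mm(\lambda,c)}^{\overline{s}} f(s)\frac{1-2s}{s}ds$. *)

theory Defs
  imports "HOL-Analysis.Analysis"
begin

text \<open>The class F^infty on (sl, sh): continuous on the open interval, essentially bounded
  (for continuous functions on an open interval: bounded), nonnegative, with f(s)(1-s)/s bounded,
  total mass 1 and vanishing first weighted moment.\<close>
definition Finf :: "real \<Rightarrow> real \<Rightarrow> (real \<Rightarrow> real) set" where
  "Finf sl sh = {f. continuous_on {sl<..<sh} f
      \<and> bounded (f ` {sl<..<sh})
      \<and> integral {sl..sh} (\<lambda>s. f s * (1 - 2 * s) / s) = (0::real)
      \<and> integral {sl..sh} (\<lambda>s. f s) = 1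
      \<and> (\<forall>s\<in>{sl<..<sh}. f s \<ge> 0)
      \<and> bounded ((\<lambda>s. f s * (1 - s) / s) ` {sl<..<sh})}"

definition mfun :: "real \<Rightarrow> real \<Rightarrow> real \<Rightarrow> real" where
  "mfun u lam c = lam * (1 + c) / (lam * (1 + c) + (u - c))"

definition mmfun :: "real \<Rightarrow> real \<Rightarrow> real \<Rightarrow> real" where
  "mmfun v lam c = lam * (1 - c) / (lam * (1 - c) + (v + c))"

definition Eset :: "real \<Rightarrow> real \<Rightarrow> real \<Rightarrow> real \<Rightarrow> real \<Rightarrow> real set" where
  "Eset sl sh u v c = {lam. lam > 0 \<and> mfun u lam c \<in> {sl<..<sh} \<and> mmfun v lam c \<in> {sl<..<sh}}"

definition Cset :: "real \<Rightarrow> real \<Rightarrow> real \<Rightarrow> real \<Rightarrow> real set" where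
  "Cset sl sh u v = {c. c \<in> {-1<..<u} \<inter> {-v<..<1} \<and> Eset sl sh u v c \<noteq> {}} - {0}"

definition Ceps :: "real \<Rightarrow> real \<Rightarrow> real \<Rightarrow> real \<Rightarrow> real \<Rightarrow> real set" where
  "Ceps sl sh u v e = Cset sl sh u v \<inter> {-1+e<..<u-e} \<inter> {-v+e<..<1-e}"

definition Gf :: "real \<Rightarrow> real \<Rightarrow> real \<Rightarrow> real \<Rightarrow> real \<Rightarrow> (real \<Rightarrow> real) \<Rightarrow> real \<Rightarrow> real \<Rightarrow> real" where
  "Gf sl sh u v p f lam c =
     p * integral {sl..mfun u lam c} (\<lambda>s. f s * (1 - 2 * s) / s)
     + (1 - p) * integral {mmfun v lam c..sh} (\<lambda>s. f s * (1 - 2 * s) / s)"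

end

theory Submission imports Defs begin
lemma h_integrable:
  assumes f: "f \<in> Finf sl sh" and sl: "0 \<le> sl"
  shows "(\<lambda>s. f s * (1 - 2 * s) / s) integrable_on {sl..sh}"
proof -
  have cf: "continuous_on {sl<..<sh} f" and b1: "bounded (f ` {sl<..<sh})"
    and b2: "bounded ((\<lambda>s. f s * (1 - s) / s) ` {sl<..<sh})"
    using f unfolding Finf_def by auto
  obtain B1 where B1: "\<And>x. x \<in> {sl<..<sh} \<Longrightarrow> norm (f x) \<le> B1"
    using b1 unfolding bounded_iff by blast
  obtain B2 where B2: "\<And>x. x \<in> {sl<..<sh} \<Longrightarrow> norm (f x * (1 - x) / x) \<le> B2"
    using b2 unfolding bounded_iff by blast
  have eq: "f x * (1 - 2 * x) / x = f x * (1 - x) / x - f x" if "x > 0" for x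
    using that by (simp add: field_simps)
  have cont: "continuous_on {sl<..<sh} (\<lambda>s. f s * (1 - 2 * s) / s)"
    by (intro continuous_intros cf) (use sl in auto)
  have meas: "(\<lambda>s. f s * (1 - 2 * s) / s) \<in> borel_measurable (lebesgue_on {sl<..<sh})"
    by (rule continuous_imp_measurable_on_sets_lebesgue[OF cont]) auto
  have gi: "(\<lambda>_. B1 + B2) integrable_on {sl<..<sh}"
    using integrable_on_Icc_iff_Ioo integrable_const_ivl by blast
  have bd: "norm (f x * (1 - 2 * x) / x) \<le> B1 + B2" if "x \<in> {sl<..<sh}" for x
  proof -
    have "x > 0" using that sl by auto
    then have "norm (f x * (1 - 2 * x) / x) = norm (f x * (1 - x) / x - f x)" by (simp add: eq)
    also have "\<dots> \<le> norm (f x * (1 - x) / x) + norm (f x)" by (rule norm_triangle_ineq4)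
    finally show ?thesis using B1[OF that] B2[OF that] by linarith
  qed
  have "(\<lambda>s. f s * (1 - 2 * s) / s) absolutely_integrable_on {sl<..<sh}"
    by (rule measurable_bounded_by_integrable_imp_absolutely_integrable[OF meas _ gi bd]) auto
  then have "(\<lambda>s. f s * (1 - 2 * s) / s) integrable_on {sl<..<sh}"
    using set_lebesgue_integral_eq_integral(1) by blast
  then show ?thesis using integrable_on_Icc_iff_Ioo by blast
qed

lemma pos_int:
  fixes g :: "real \<Rightarrow> real"
  assumes "continuous_on {x..y} g" "x < y" "\<And>s. s \<in> {x..y} \<Longrightarrow> g s \<ge> 0"
    "t \<in> {x..y}" "g t > 0"
  shows "integral {x..y} g > 0"
proof -
  have "integral {x..y} g \<ge> 0" by (rule integral_nonneg) (use assms integrable_continuous_interval in auto)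
  moreover have "integral {x..y} g \<noteq> 0" using integral_eq_0_iff[OF assms(1-3)] assms(4,5) by force
  ultimately show ?thesis by linarith
qed

lemma m_order:
  assumes "lam > 0" "-1 < c" "c < u" "u > 0"
  shows "c < 0 \<Longrightarrow> mfun u lam c < mfun u lam 0" and "c > 0 \<Longrightarrow> mfun u lam 0 < mfun u lam c"
proof -
  have d1: "lam * (1 + c) + (u - c) > 0" using assms by (smt (verit) mult_pos_pos)
  have d0: "lam + u > 0" using assms by linarith
  have key: "mfun u lam c - mfun u lam 0 = lam * c * (1 + u) / ((lam * (1 + c) + (u - c)) * (lam + u))"
    unfolding mfun_def using d1 d0 by (simp add: field_simps) 
  show "c < 0 \<Longrightarrow> mfun u lam c < mfun u lam 0"
  proof -
    assume "c < 0"
    then have "lam * c < 0" using assms by (simp add: mult_pos_neg)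
    then have "lam * c * (1 + u) < 0" using assms by (simp add: mult_neg_pos)
    then have "lam * c * (1 + u) / ((lam * (1 + c) + (u - c)) * (lam + u)) < 0"
      using d1 d0 by (intro divide_neg_pos) (auto intro!: mult_pos_pos)
    then show ?thesis using key by linarith
  qed
  show "c > 0 \<Longrightarrow> mfun u lam 0 < mfun u lam c"
  proof -
    assume "c > 0"
    then have "lam * c * (1 + u) / ((lam * (1 + c) + (u - c)) * (lam + u)) > 0"
      using assms d1 d0 by (intro divide_pos_pos) (auto intro!: mult_pos_pos)
    then show ?thesis using key by linarith
  qed
qed

lemma mm_order:
  assumes "lam > 0" "-v < c" "c < 1" "v > 0"
  shows "c < 0 \<Longrightarrow> mmfun v lam 0 < mmfun v lam c" and "c > 0 \<Longrightarrow> mmfun v lam c < mmfun v lam 0"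
proof -
  have d1: "lam * (1 - c) + (v + c) > 0" using assms by (smt (verit) mult_pos_pos)
  have d0: "lam + v > 0" using assms by linarith
  have key: "mmfun v lam 0 - mmfun v lam c = lam * c * (1 + v) / ((lam * (1 - c) + (v + c)) * (lam + v))"
    unfolding mmfun_def using d1 d0 by (simp add: field_simps) 
  show "c < 0 \<Longrightarrow> mmfun v lam 0 < mmfun v lam c"
  proof -
    assume "c < 0"
    then have "lam * c < 0" using assms by (simp add: mult_pos_neg)
    then have "lam * c * (1 + v) < 0" using assms by (simp add: mult_neg_pos)
    then have "lam * c * (1 + v) / ((lam * (1 - c) + (v + c)) * (lam + v)) < 0"
      using d1 d0 by (intro divide_neg_pos) (auto intro!: mult_pos_pos)
    then show ?thesis using key by linarith
  qed
  show "c > 0 \<Longrightarrow> mmfun v lam c < mmfun v lam 0"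
  proof -
    assume "c > 0"
    then have "lam * c * (1 + v) / ((lam * (1 - c) + (v + c)) * (lam + v)) > 0"
      using assms d1 d0 by (intro divide_pos_pos) (auto intro!: mult_pos_pos)
    then show ?thesis using key by linarith
  qed
qed

lemma half_lemma:
  assumes "(A::real) > 0" "B > 0"
  shows "A \<le> B \<Longrightarrow> A / (A + B) \<le> 1/2" and "B \<le> A \<Longrightarrow> 1/2 \<le> A / (A + B)"
  using assms by (auto simp: field_simps)

lemma sign_int:
  fixes f :: "real \<Rightarrow> real"
  assumes f: "f \<in> Finf sl sh" and sl: "0 \<le> sl"
    and nz: "\<not> (\<exists>z1 z2. sl < z1 \<and> z1 < z2 \<and> z2 < sh \<and> (\<forall>s \<in> {z1..z2}. f s = 0))"
    and xy: "sl < x" "x < y" "y < sh"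
  shows "y \<le> 1/2 \<Longrightarrow> integral {x..y} (\<lambda>s. f s * (1 - 2 * s) / s) > 0"
    and "1/2 \<le> x \<Longrightarrow> integral {x..y} (\<lambda>s. f s * (1 - 2 * s) / s) < 0"
proof -
  have cf: "continuous_on {sl<..<sh} f" and fnn: "\<And>s. s \<in> {sl<..<sh} \<Longrightarrow> f s \<ge> 0"
    using f unfolding Finf_def by auto
  have cont: "continuous_on {sl<..<sh} (\<lambda>s. f s * (1 - 2 * s) / s)"
    by (intro continuous_intros cf) (use sl in auto)
  have sub: "{x..y} \<subseteq> {sl<..<sh}" using xy by auto
  have conth: "continuous_on {x..y} (\<lambda>s. f s * (1 - 2 * s) / s)"
    using continuous_on_subset[OF cont sub] .
  show "integral {x..y} (\<lambda>s. f s * (1 - 2 * s) / s) > 0" if hy: "y \<le> 1/2"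
  proof -
    have "sl < x \<and> x < (x+y)/2 \<and> (x+y)/2 < sh" using xy by auto
    then have "\<not> (\<forall>s\<in>{x..(x+y)/2}. f s = 0)" using nz by blast
    then obtain t where t: "t \<in> {x..(x+y)/2}" "f t \<noteq> 0" by blast
    have "t \<in> {sl<..<sh}" using t xy by auto
    then have ft: "f t > 0" using fnn t by force
    have "t > 0" "1 - 2 * t > 0" using t xy sl hy by auto
    then have gt: "f t * (1 - 2 * t) / t > 0" using ft by simp
    show ?thesis
    proof (rule pos_int[OF conth xy(2) _ _ gt])
      show "t \<in> {x..y}" using t by auto
      fix s assume s: "s \<in> {x..y}"
      then have "s > 0" "1 - 2 * s \<ge> 0" "f s \<ge> 0" using xy sl hy fnn sub by auto
      then show "f s * (1 - 2 * s) / s \<ge> 0" by simp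
    qed
  qed
  show "integral {x..y} (\<lambda>s. f s * (1 - 2 * s) / s) < 0" if hx: "1/2 \<le> x"
  proof -
    have "sl < (x+y)/2 \<and> (x+y)/2 < y \<and> y < sh" using xy by auto
    then have "\<not> (\<forall>s\<in>{(x+y)/2..y}. f s = 0)" using nz by blast
    then obtain t where t: "t \<in> {(x+y)/2..y}" "f t \<noteq> 0" by blast
    have "t \<in> {sl<..<sh}" using t xy by auto
    then have ft: "f t > 0" using fnn t by force
    have "t > 0" "1 - 2 * t < 0" using t xy sl hx by auto
    then have gt: "- (f t * (1 - 2 * t) / t) > 0" using ft by (simp add: mult_pos_neg divide_neg_pos)
    have conth': "continuous_on {x..y} (\<lambda>s. - (f s * (1 - 2 * s) / s))"
      by (intro continuous_intros conth)
    have "integral {x..y} (\<lambda>s. - (f s * (1 - 2 * s) / s)) > 0"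
    proof (rule pos_int[OF conth' xy(2) _ _ gt])
      show "t \<in> {x..y}" using t by auto
      fix s assume s: "s \<in> {x..y}"
      then have "s > 0" "1 - 2 * s \<le> 0" "f s \<ge> 0" using xy sl hx fnn sub by auto
      then show "- (f s * (1 - 2 * s) / s) \<ge> 0"
        by (simp add: divide_nonpos_pos mult_nonneg_nonpos)
    qed
    then show ?thesis by simp
  qed
qed

lemma combine_contra:
  fixes h :: "real \<Rightarrow> real"
  assumes hi: "h integrable_on {sl..sh}"
    and pts: "sl < x1" "x1 < x2" "x2 < sh" "sl < y1" "y1 < y2" "y2 < sh"
    and p: "0 < p" "p < 1"
    and sg: "(integral {x1..x2} h > 0 \<and> integral {y1..y2} h > 0) \<or>
             (integral {x1..x2} h < 0 \<and> integral {y1..y2} h < 0)"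
    and e1: "p * integral {sl..x1} h + (1 - p) * integral {y2..sh} h = 0"
    and e2: "p * integral {sl..x2} h + (1 - p) * integral {y1..sh} h = 0"
  shows False
proof -
  have c1: "integral {sl..x2} h = integral {sl..x1} h + integral {x1..x2} h"
    using Henstock_Kurzweil_Integration.integral_combine[where a=sl and c=x1 and b=x2 and f=h] integrable_subinterval_real[OF hi, of sl x2] pts by auto
  have c2: "integral {y1..sh} h = integral {y1..y2} h + integral {y2..sh} h"
    using Henstock_Kurzweil_Integration.integral_combine[where a=y1 and c=y2 and b=sh and f=h] integrable_subinterval_real[OF hi, of y1 sh] pts by auto
  have eq: "p * integral {x1..x2} h + (1 - p) * integral {y1..y2} h = 0"
    using e1 e2 c1 c2 by (simp add: algebra_simps)
  from sg show False
  proof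
    assume "integral {x1..x2} h > 0 \<and> integral {y1..y2} h > 0"
    then have "p * integral {x1..x2} h > 0" "(1 - p) * integral {y1..y2} h > 0" using p by auto
    then show False using eq by linarith
  next
    assume "integral {x1..x2} h < 0 \<and> integral {y1..y2} h < 0"
    then have "p * integral {x1..x2} h < 0" "(1 - p) * integral {y1..y2} h < 0" using p
      by (auto simp: mult_pos_neg)
    then show False using eq by linarith
  qed
qed

theorem proposition10:
  fixes sl sh p u v e0 :: real
  assumes "0 \<le> sl" "sl < sh" "sh \<le> 1"
    and "0 < p" "p < 1"
    and "u > 0" "v > 0" "u \<noteq> v"
    and "e0 > 0" "Ceps sl sh u v e0 \<noteq> {}"
  shows "\<exists>lam_lo lam_hi :: real. lam_lo > 0 \<and>
    (\<forall>f \<in> Finf sl sh. \<forall>c \<in> Ceps sl sh u v e0. \<forall>lam.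
       lam \<in> Eset sl sh u v 0 \<inter> Eset sl sh u v c \<inter> ({0<..<lam_lo} \<union> {lam_hi<..}) \<and>
       Gf sl sh u v p f lam 0 = 0 \<and> Gf sl sh u v p f lam c = 0 \<longrightarrow>
       (\<exists>z1 z2. sl < z1 \<and> z1 < z2 \<and> z2 < sh \<and> (\<forall>s \<in> {z1..z2}. f s = 0)))"
proof -
  define lo where "lo = min (e0/2) (min u v / 2)"
  define hi where "hi = (u + v + 1) / e0 + u + v"
  have lo_pos: "lo > 0" unfolding lo_def using assms by auto
  have hi_ge: "hi \<ge> u" "hi \<ge> v" "hi \<ge> (u + v + 1) / e0"
    unfolding hi_def using assms by auto
  have "\<forall>f \<in> Finf sl sh. \<forall>c \<in> Ceps sl sh u v e0. \<forall>lam.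
       lam \<in> Eset sl sh u v 0 \<inter> Eset sl sh u v c \<inter> ({0<..<lo} \<union> {hi<..}) \<and>
       Gf sl sh u v p f lam 0 = 0 \<and> Gf sl sh u v p f lam c = 0 \<longrightarrow>
       (\<exists>z1 z2. sl < z1 \<and> z1 < z2 \<and> z2 < sh \<and> (\<forall>s \<in> {z1..z2}. f s = 0))"
  proof (intro ballI allI impI)
    fix f c lam
    assume f: "f \<in> Finf sl sh" and cC: "c \<in> Ceps sl sh u v e0"
      and H: "lam \<in> Eset sl sh u v 0 \<inter> Eset sl sh u v c \<inter> ({0<..<lo} \<union> {hi<..}) \<and>
       Gf sl sh u v p f lam 0 = 0 \<and> Gf sl sh u v p f lam c = 0"
    show "\<exists>z1 z2. sl < z1 \<and> z1 < z2 \<and> z2 < sh \<and> (\<forall>s \<in> {z1..z2}. f s = 0)"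
    proof (rule ccontr)
      assume nz: "\<not> (\<exists>z1 z2. sl < z1 \<and> z1 < z2 \<and> z2 < sh \<and> (\<forall>s \<in> {z1..z2}. f s = 0))"
      have cb: "-1 + e0 < c" "c < u - e0" "-v + e0 < c" "c < 1 - e0" "c \<noteq> 0" "-1 < c" "c < u" "-v < c" "c < 1"
        using cC unfolding Ceps_def Cset_def by auto
      have lam: "lam > 0" "lam < lo \<or> lam > hi" using H unfolding Eset_def by auto
      define a where "a = mfun u lam 0"
      define b where "b = mmfun v lam 0"
      define a' where "a' = mfun u lam c"
      define b' where "b' = mmfun v lam c"
      have inr: "a \<in> {sl<..<sh}" "b \<in> {sl<..<sh}" "a' \<in> {sl<..<sh}" "b' \<in> {sl<..<sh}"
        using H unfolding Eset_def a_def b_def a'_def b'_def by auto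
      have G0: "p * integral {sl..a} (\<lambda>s. f s * (1 - 2 * s) / s)
          + (1 - p) * integral {b..sh} (\<lambda>s. f s * (1 - 2 * s) / s) = 0"
        using H unfolding Gf_def a_def b_def by auto
      have Gc: "p * integral {sl..a'} (\<lambda>s. f s * (1 - 2 * s) / s)
          + (1 - p) * integral {b'..sh} (\<lambda>s. f s * (1 - 2 * s) / s) = 0"
        using H unfolding Gf_def a'_def b'_def by auto
      have hi_int: "(\<lambda>s. f s * (1 - 2 * s) / s) integrable_on {sl..sh}"
        by (rule h_integrable[OF f assms(1)])
      have p1: "1 + c > 0" "u - c > 0" "1 - c > 0" "v + c > 0" "1 + c > e0" "1 - c > e0"
        using cb by auto
      have regime: "(a \<le> 1/2 \<and> b \<le> 1/2 \<and> a' \<le> 1/2 \<and> b' \<le> 1/2) \<or>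
                    (1/2 \<le> a \<and> 1/2 \<le> b \<and> 1/2 \<le> a' \<and> 1/2 \<le> b')"
      proof (cases "lam < lo")
        case True
        have l1: "lam < e0 / 2" "lam < u / 2" "lam < v / 2" using True unfolding lo_def by auto
        have "lam * (1 + c) \<le> lam * 2" using lam p1 cb by (intro mult_left_mono) auto
        then have A1: "lam * (1 + c) \<le> u - c" using l1 cb by linarith
        have "lam * (1 - c) \<le> lam * 2" using lam p1 cb by (intro mult_left_mono) auto
        then have A2: "lam * (1 - c) \<le> v + c" using l1 cb by linarith
        have "a \<le> 1/2" unfolding a_def mfun_def
          by (rule half_lemma(1)) (use lam l1 assms in auto)
        moreover have "b \<le> 1/2" unfolding b_def mmfun_def
          by (rule half_lemma(1)) (use lam l1 assms in auto)
        moreover have "a' \<le> 1/2" unfolding a'_def mfun_def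
          by (rule half_lemma(1)) (use lam p1 A1 in auto)
        moreover have "b' \<le> 1/2" unfolding b'_def mmfun_def
          by (rule half_lemma(1)) (use lam p1 A2 in auto)
        ultimately show ?thesis by auto
      next
        case False
        then have lh: "lam > hi" using lam by auto
        have "(u + v + 1) / e0 < lam" using lh hi_ge(3) by linarith
        then have le: "lam * e0 > u + v + 1"
          using assms(9) by (simp add: pos_divide_less_eq)
        have "lam * (1 + c) \<ge> lam * e0" using lam p1 by (intro mult_left_mono) auto
        then have A1: "u - c \<le> lam * (1 + c)" using le cb assms by linarith
        have "lam * (1 - c) \<ge> lam * e0" using lam p1 by (intro mult_left_mono) auto
        then have A2: "v + c \<le> lam * (1 - c)" using le cb assms by linarith
        have "1/2 \<le> a" unfolding a_def mfun_def
          by (rule half_lemma(2)) (use lam lh hi_ge assms in auto)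
        moreover have "1/2 \<le> b" unfolding b_def mmfun_def
          by (rule half_lemma(2)) (use lam lh hi_ge assms in auto)
        moreover have "1/2 \<le> a'" unfolding a'_def mfun_def
          by (rule half_lemma(2)) (use lam p1 A1 in auto)
        moreover have "1/2 \<le> b'" unfolding b'_def mmfun_def
          by (rule half_lemma(2)) (use lam p1 A2 in auto)
        ultimately show ?thesis by auto
      qed
      note SI = sign_int[OF f assms(1) nz]
      show False
      proof (cases "c < 0")
        case True
        have o1: "a' < a" unfolding a'_def a_def using m_order(1)[OF lam(1) cb(6) cb(7) assms(6) True] .
        have o2: "b < b'" unfolding b'_def b_def using mm_order(1)[OF lam(1) cb(8) cb(9) assms(7) True] .
        show False
        proof (rule combine_contra[OF hi_int _ o1 _ _ o2 _ assms(4,5) _ Gc G0])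
          show "(integral {a'..a} (\<lambda>s. f s * (1 - 2 * s) / s) > 0 \<and> integral {b..b'} (\<lambda>s. f s * (1 - 2 * s) / s) > 0) \<or>
             (integral {a'..a} (\<lambda>s. f s * (1 - 2 * s) / s) < 0 \<and> integral {b..b'} (\<lambda>s. f s * (1 - 2 * s) / s) < 0)"
            using regime SI[of a' a] SI[of b b'] inr o1 o2 by auto
        qed (use inr in auto)
      next
        case False
        then have cp: "c > 0" using cb by auto
        have o1: "a < a'" unfolding a'_def a_def using m_order(2)[OF lam(1) cb(6) cb(7) assms(6) cp] .
        have o2: "b' < b" unfolding b'_def b_def using mm_order(2)[OF lam(1) cb(8) cb(9) assms(7) cp] .
        show False
        proof (rule combine_contra[OF hi_int _ o1 _ _ o2 _ assms(4,5) _ G0 Gc])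
          show "(integral {a..a'} (\<lambda>s. f s * (1 - 2 * s) / s) > 0 \<and> integral {b'..b} (\<lambda>s. f s * (1 - 2 * s) / s) > 0) \<or>
             (integral {a..a'} (\<lambda>s. f s * (1 - 2 * s) / s) < 0 \<and> integral {b'..b} (\<lambda>s. f s * (1 - 2 * s) / s) < 0)"
            using regime SI[of a a'] SI[of b' b] inr o1 o2 by auto
        qed (use inr in auto)
      qed
    qed
  qed
  then show ?thesis using lo_pos by blast
qed

end
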